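(* Let $A=\begin{pmatrix}\alpha&0\\\beta&0\end{pmatrix}$ and $B=\begin{pmatrix}0&\gamma\\0&\delta\end{pmatrix}$ be rank-one matrices in $M_2(\mathbb C)$. Then every matrix in $A^\perp\cap B^\perp$ has rank at most one if and only if $(\alpha,\beta)\in\mathbb C(\gamma,\delta)\setminus\{0\}$.
   Context: $M_2(\mathbb C)$ carries the operator (spectral) norm. $X\perp Y$ (Birkhoff–James orthogonality) means $\|X+\lambda Y\|\ge\|X\|$ for all $\lambda\in\mathbb C$, and $X^\perp:=\{Y: X\perp Y\}$. *)

theory Defs
  imports "HOL-Analysis.Analysis"
begin

type_synonym cmat2 = "complex^2^2"

definition mat2 :: "complex \<Rightarrow> complex \<Rightarrow> complex \<Rightarrow> complex \<Rightarrow> cmat2" where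
  "mat2 a b c d = (\<chi> i j. if i = 1 then (if j = 1 then a else b) else (if j = 1 then c else d))"

definition opnorm :: "cmat2 \<Rightarrow> real" where
  "opnorm M = onorm (\<lambda>x::complex^2. M *v x)"

definition cscale :: "complex \<Rightarrow> cmat2 \<Rightarrow> cmat2" where
  "cscale c M = (\<chi> i j. c * M $ i $ j)"

definition bj_orth :: "cmat2 \<Rightarrow> cmat2 \<Rightarrow> bool" where
  "bj_orth X Y \<longleftrightarrow> (\<forall>l::complex. opnorm (X + cscale l Y) \<ge> opnorm X)"

definition bj_perp :: "cmat2 \<Rightarrow> cmat2 set" where
  "bj_perp X = {Y. bj_orth X Y}"

end

theory Submission
  imports Defs
begin

lemma rows2: "rows (X::'a::field^2^2) = {row 1 X, row 2 X}"
  unfolding rows_def UNIV_2 by auto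

lemma rank_det_nz:
  fixes X :: "'a::field^2^2"
  assumes "det X \<noteq> 0"
  shows "rank X = 2"
proof -
  have "v \<in> vec.span (rows X)" for v :: "'a^2"
  proof -
    define d where "d = det X"
    define c1 where "c1 = (v$1 * X$2$2 - v$2 * X$2$1) / d"
    define c2 where "c2 = (v$2 * X$1$1 - v$1 * X$1$2) / d"
    have d: "d = X$1$1 * X$2$2 - X$1$2 * X$2$1" unfolding d_def by (simp add: det_2)
    have "d \<noteq> 0" using assms d_def by simp
    have c1d: "c1 * d = v$1 * X$2$2 - v$2 * X$2$1" using \<open>d \<noteq> 0\<close> by (simp add: c1_def)
    have c2d: "c2 * d = v$2 * X$1$1 - v$1 * X$1$2" using \<open>d \<noteq> 0\<close> by (simp add: c2_def)
    have e1: "(c1 * X$1$1 + c2 * X$2$1) * d = v$1 * d" using c1d c2d d by algebra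
    have e2: "(c1 * X$1$2 + c2 * X$2$2) * d = v$2 * d" using c1d c2d d by algebra
    have "v = c1 *s row 1 X + c2 *s row 2 X"
    proof (rule vec_eq_iff[THEN iffD2], rule allI)
      fix i :: 2
      show "v $ i = (c1 *s row 1 X + c2 *s row 2 X) $ i"
        using exhaust_2[of i] e1 e2 \<open>d \<noteq> 0\<close>
        by (auto simp: row_def)
    qed
    also have "\<dots> \<in> vec.span (rows X)"
      by (intro vec.span_add vec.span_scale vec.span_base) (auto simp: rows2)
    finally show ?thesis .
  qed
  then have "vec.span (rows X) = UNIV" by auto
  then have "vec.dim (rows X) = CARD(2)" 
    by (metis vec.dim_span vec_dim_card)
  then show ?thesis unfolding row_rank_def_gen by simp
qed

lemma rank_det_0:
  fixes X :: "'a::field^2^2"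
  assumes "det X = 0"
  shows "rank X \<le> 1"
proof -
  have d: "X$1$1 * X$2$2 = X$1$2 * X$2$1" using assms by (simp add: det_2)
  obtain w where w: "rows X \<subseteq> vec.span {w}"
  proof (cases "row 1 X = 0")
    case True
    then show ?thesis using that[of "row 2 X"] by (auto simp: rows2 vec.span_base vec.span_zero)
  next
    case False
    obtain k where k: "row 2 X = k *s row 1 X"
    proof (cases "X$1$1 = 0")
      case True
      have "X$1$2 \<noteq> 0"
      proof
        assume "X$1$2 = 0"
        then have "row 1 X = 0" using True by (auto simp: vec_eq_iff row_def forall_2)
        then show False using False by simp
      qed
      then have "X$2$1 = 0" using d True by simp
      show ?thesis
        apply (rule that[of "X$2$2 / X$1$2"])
        using True \<open>X$2$1 = 0\<close> \<open>X$1$2 \<noteq> 0\<close> by (auto simp: vec_eq_iff row_def forall_2)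
    next
      case False
      have "X$2$2 = X$2$1 / X$1$1 * X$1$2" using d False by (simp add: field_simps)
      then show ?thesis
        apply (intro that[of "X$2$1 / X$1$1"])
        using False by (auto simp: vec_eq_iff row_def forall_2)
    qed
    then show ?thesis using that[of "row 1 X"]
      by (auto simp: rows2 vec.span_base vec.span_scale)
  qed
  then have "vec.dim (rows X) \<le> card {w}" by (intro vec.dim_le_card) auto
  then show ?thesis unfolding row_rank_def_gen by simp
qed

lemma rank_zero2: "rank (0::'a::field^2^2) = 0"
proof -
  have "vec.dim (rows (0::'a::field^2^2)) \<le> card ({}::('a^2) set)"
    by (intro vec.dim_le_card) (auto simp: rows2 row_def vec.span_zero vec_eq_iff)
  then show ?thesis unfolding row_rank_def_gen by simp
qed

definition colmat :: "2 \<Rightarrow> complex^2 \<Rightarrow> cmat2" where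
  "colmat j a = (\<chi> i k. if k = j then a$i else 0)"

definition ip :: "complex^2 \<Rightarrow> complex^2 \<Rightarrow> complex" where
  "ip a u = (\<Sum>i\<in>UNIV. cnj (a$i) * u$i)"

definition oth :: "2 \<Rightarrow> 2" where "oth j = (if j = 1 then 2 else 1)"

lemma sum_oth: "sum f (UNIV::2 set) = f j + f (oth j)"
  using exhaust_2[of j] by (auto simp: sum_2 oth_def add.commute)

lemma inner_ip: "inner a u = Re (ip a u)"
  by (simp add: inner_vec_def ip_def inner_complex_def)

lemma ip_scale: "ip (p *s a) (q *s u) = cnj p * q * ip a u"
  by (simp add: ip_def sum_distrib_left algebra_simps)

lemma ip_scale_right: "ip a (q *s u) = q * ip a u"
  by (simp add: ip_def sum_distrib_left algebra_simps)

lemma ip_add_right: "ip a (u + v) = ip a u + ip a v"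
  by (simp add: ip_def sum.distrib algebra_simps)

lemma norm_sq: "(norm (x::complex^2))^2 = (cmod (x$1))^2 + (cmod (x$2))^2"
  by (simp add: norm_vec_def L2_set_def sum_2 sum_nonneg)

lemma norm_sq_oth: "(norm (x::complex^2))^2 = (cmod (x$j))^2 + (cmod (x$oth j))^2"
  using exhaust_2[of j] by (auto simp: norm_sq oth_def)

lemma comp_le_norm: "cmod (x$j) \<le> norm (x::complex^2)"
proof -
  have "(cmod (x$j))^2 \<le> (norm x)^2" using norm_sq_oth[of x j] by simp
  then show ?thesis by (simp add: power2_le_iff_abs_le)
qed

lemma norm_smult: "norm (c *s (v::complex^2)) = cmod c * norm v"
proof -
  have "(norm (c *s v))^2 = (cmod c * norm v)^2"
    by (simp add: norm_sq norm_mult power_mult_distrib algebra_simps)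
  then show ?thesis by (simp add: power2_eq_iff_nonneg)
qed

lemma norm_add_sq: "(norm (x + y))^2 = (norm x)^2 + 2 * inner x y + (norm y)^2"
  for x y :: "complex^2"
  by (simp add: power2_norm_eq_inner inner_add inner_commute)

lemma mv_colmat: "colmat j a *v x = x$j *s a"
  using exhaust_2[of j] by (auto simp: vec_eq_iff matrix_vector_mult_def colmat_def sum_2)

lemma mv_add: "(A + B) *v (x::complex^2) = A *v x + B *v x" for A B :: cmat2
  by (simp add: matrix_vector_mult_add_rdistrib)

lemma mv_cscale: "cscale l Y *v x = l *s (Y *v x)"
  by (simp add: vec_eq_iff matrix_vector_mult_def cscale_def sum_distrib_left algebra_simps)

lemma mv_cols: "Y *v x = x$j *s column j Y + x$(oth j) *s column (oth j) Y" for Y :: cmat2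
  by (simp add: vec_eq_iff matrix_vector_mult_def column_def sum_oth[of _ j] mult.commute)

lemma mv_axis: "Y *v axis j 1 = column j Y" for Y :: cmat2
  using exhaust_2[of j] by (auto simp: vec_eq_iff matrix_vector_mult_def column_def sum_2 axis_def)

lemma norm_axis: "norm (axis j 1 :: complex^2) = 1"
proof -
  have "(norm (axis j 1 :: complex^2))^2 = 1" using exhaust_2[of j] by (auto simp: norm_sq axis_def)
  then show ?thesis using norm_ge_zero[of "axis j 1 :: complex^2"] by (smt (verit) power2_eq_1_iff)
qed

lemma opnorm_colmat_le: "opnorm (colmat j a) \<le> norm a"
  unfolding opnorm_def mv_colmat
  by (rule onorm_le) (simp add: norm_smult, metis comp_le_norm mult.commute mult_left_mono norm_ge_zero)

lemma opnorm_ge: "norm (M *v x) \<le> opnorm M * norm x"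
  unfolding opnorm_def by (rule onorm) simp

lemma opnorm_colmat_ge: "norm a \<le> opnorm (colmat j a)"
proof -
  have "(axis j 1 :: complex^2) $ j = 1" by (simp add: axis_def)
  then show ?thesis using opnorm_ge[of "colmat j a" "axis j 1"] by (simp add: mv_colmat norm_axis)
qed

lemma real_key:
  fixes a2 C D K t r s N :: real
  assumes "a2 > 0" "C > 0" "D \<ge> 0" "K \<ge> 0" "t > 0" "t*K \<le> 1/2" "t*C \<le> a2/2" "t*D^2 \<le> C*a2/2"
   "N \<le> a2*r^2 - 2*t*C*r^2 + 2*t*D*r* s + t^2*C*K*(r^2+s^2)"
  shows "N \<le> (a2 - t*C/2)*(r^2+s^2)"
proof -
  have h1: "0 \<le> t*(C*r - D* s)^2" using assms by simp
  have h2: "2*t*D*r* s*C \<le> t*C^2*r^2 + t*D^2* s^2" using h1 by (simp add: power2_eq_square algebra_simps)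
  have h3: "2*t*D*r* s \<le> t*C*r^2 + (t*D^2/C)* s^2"
  proof -
    have "(2*t*D*r* s)*C \<le> (t*C*r^2 + (t*D^2/C)* s^2)*C" using h2 assms(2)
      by (simp add: algebra_simps power2_eq_square)
    then show ?thesis using assms(2) by (simp add: mult_le_cancel_right)
  qed
  have h4: "(t*D^2/C)* s^2 \<le> (a2/2)* s^2"
  proof -
    have "t*D^2/C \<le> a2/2" using assms(2,8) by (simp add: divide_le_eq mult.commute)
    then show ?thesis by (rule mult_right_mono) simp
  qed
  have h5: "t^2*C*K*(r^2+s^2) \<le> (t*C/2)*(r^2+s^2)"
  proof -
    have "t^2*C*K = (t*C)*(t*K)" by (simp add: power2_eq_square)
    also have "\<dots> \<le> (t*C)*(1/2)" using assms by (intro mult_left_mono) auto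
    finally show ?thesis by (intro mult_right_mono) auto
  qed
  have h6: "t*C* s^2 \<le> a2/2* s^2" using assms(7) by (rule mult_right_mono) simp
  define p where "p = t*C*r^2"
  define q where "q = t*C* s^2"
  define X where "X = (t*D^2/C)* s^2"
  define Y where "Y = t^2*C*K*(r^2+s^2)"
  define W where "W = 2*t*D*r* s"
  have A: "N \<le> a2*r^2 - 2*p + W + Y" using assms(9) by (simp add: p_def W_def Y_def algebra_simps)
  have B: "W \<le> p + X" using h3 by (simp add: p_def W_def X_def)
  have C: "X \<le> a2* s^2/2" using h4 by (simp add: X_def)
  have D: "Y \<le> p/2 + q/2" using h5 by (simp add: Y_def p_def q_def algebra_simps)
  have E: "q \<le> a2* s^2/2" using h6 by (simp add: q_def)
  have G: "(a2 - t*C/2)*(r^2+s^2) = a2*r^2 + a2* s^2 - p/2 - q/2" by (simp add: p_def q_def algebra_simps)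
  show ?thesis unfolding G using A B C D E by linarith
qed

lemma exists_t:
  fixes a2 C D K :: real
  assumes "a2 > 0" "C > 0" "D \<ge> 0" "K \<ge> 0"
  shows "\<exists>t>0. t*K \<le> 1/2 \<and> t*C \<le> a2/2 \<and> t*D^2 \<le> C*a2/2"
proof -
  define t where "t = min (1/(2*K+2)) (min (a2/(2*C)) (C*a2/(2*D^2+2)))"
  have "0 < C*a2/(2*D^2+2)" using assms by (intro divide_pos_pos mult_pos_pos) (auto intro: add_nonneg_pos)
  then have t0: "t > 0" using assms by (simp add: t_def)
  have "t*K \<le> (1/(2*K+2))*K" using assms by (intro mult_right_mono) (auto simp: t_def)
  also have "\<dots> \<le> 1/2" using assms by (simp add: field_simps)
  finally have 1: "t*K \<le> 1/2" .
  have "t*C \<le> (a2/(2*C))*C" using assms by (intro mult_right_mono) (auto simp: t_def)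
  also have "\<dots> = a2/2" using assms by simp
  finally have 2: "t*C \<le> a2/2" .
  have "t*D^2 \<le> (C*a2/(2*D^2+2))*D^2" using assms by (intro mult_right_mono) (auto simp: t_def)
  also have "\<dots> \<le> C*a2/2"
  proof -
    have pos: "2*D^2+2 > 0" by (simp add: add_nonneg_pos)
    then have "D^2/(2*D^2+2) \<le> 1/2" by (simp add: divide_le_eq)
    then have "(C*a2)*(D^2/(2*D^2+2)) \<le> (C*a2)*(1/2)" using assms by (intro mult_left_mono) auto
    then show ?thesis by simp
  qed
  finally have 3: "t*D^2 \<le> C*a2/2" .
  show ?thesis using t0 1 2 3 by blast
qed

lemma orth_imp:
  assumes "a \<noteq> 0" "bj_orth (colmat j a) Y"
  shows "ip a (column j Y) = 0"
proof (rule ccontr)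
  assume cnz: "ip a (column j Y) \<noteq> 0"
  define c where "c = ip a (column j Y)"
  define d where "d = ip a (column (oth j) Y)"
  define a2 where "a2 = (norm a)^2"
  define C where "C = (cmod c)^2"
  define D where "D = cmod c * cmod d"
  define K where "K = (opnorm Y)^2"
  have a2: "a2 > 0" using assms(1) by (simp add: a2_def)
  have C: "C > 0" using cnz by (simp add: C_def c_def)
  have D: "D \<ge> 0" by (simp add: D_def)
  have K: "K \<ge> 0" by (simp add: K_def)
  obtain t where t: "t > 0" "t*K \<le> 1/2" "t*C \<le> a2/2" "t*D^2 \<le> C*a2/2"
    using exists_t[OF a2 C D K] by blast
  define l where "l = - complex_of_real t * cnj c"
  define M where "M = colmat j a + cscale l Y"
  have bound: "(norm (M *v x))^2 \<le> (a2 - t*C/2) * (norm x)^2" for x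
  proof -
    define u where "u = Y *v x"
    define r where "r = cmod (x$j)"
    define s where "s = cmod (x$oth j)"
    have Mx: "M *v x = x$j *s a + l *s u" by (simp add: M_def mv_add mv_colmat mv_cscale u_def)
    have ipu: "ip a u = x$j * c + x$oth j * d"
      by (simp add: u_def mv_cols[of Y x j] ip_add_right ip_scale_right c_def d_def)
    have nx: "(norm x)^2 = r^2 + s^2" by (simp add: r_def s_def norm_sq_oth[of x j])
    have nu: "(norm u)^2 \<le> K * (norm x)^2"
    proof -
      have "norm u \<le> opnorm Y * norm x" by (simp add: u_def opnorm_ge)
      then have "(norm u)^2 \<le> (opnorm Y * norm x)^2" by (simp add: power_mono)
      then show ?thesis by (simp add: K_def power_mult_distrib)
    qed
    have cl: "cmod l = t * cmod c" using t by (simp add: l_def norm_mult)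
    have "(norm (M *v x))^2 = r^2 * a2 + 2 * Re (cnj (x$j) * l * ip a u) + (cmod l)^2 * (norm u)^2"
      unfolding Mx norm_add_sq inner_ip ip_scale
      by (simp add: norm_smult power_mult_distrib r_def a2_def)
    also have "cnj (x$j) * l * ip a u = - complex_of_real (t * C * r^2) - t * (cnj c * d * cnj (x$j) * x$oth j)"
    proof -
      have "cnj (x$j) * x$j = complex_of_real (r^2)" using complex_norm_square[of "x$j"] by (simp add: r_def mult.commute)
      moreover have "cnj c * c = complex_of_real C" using complex_norm_square[of c] by (simp add: C_def mult.commute)
      ultimately show ?thesis unfolding ipu l_def
        by (simp add: algebra_simps)
    qed
    also have reb: "Re (- complex_of_real (t * C * r^2) - t * (cnj c * d * cnj (x$j) * x$oth j)) \<le> - t*C*r^2 + t*D*r* s"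
    proof -
      have "- Re (cnj c * d * cnj (x$j) * x$oth j) \<le> cmod (cnj c * d * cnj (x$j) * x$oth j)"
        using abs_Re_le_cmod by (smt (verit))
      also have "\<dots> = D*r* s" by (simp add: D_def r_def s_def norm_mult)
      finally have "- Re (cnj c * d * cnj (x$j) * x$oth j) \<le> D*r* s" .
      then have "t * (- Re (cnj c * d * cnj (x$j) * x$oth j)) \<le> t * (D*r* s)"
        using t(1) by (intro mult_left_mono) auto
      then show ?thesis by (simp add: algebra_simps)
    qed
    then have "r^2 * a2 + 2 * Re (- complex_of_real (t * C * r^2) - t * (cnj c * d * cnj (x$j) * x$oth j)) + (cmod l)^2 * (norm u)^2
       \<le> a2*r^2 - 2*t*C*r^2 + 2*t*D*r* s + t^2*C*K*(r^2+s^2)"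
    proof -
      have "(cmod l)^2 * (norm u)^2 \<le> (cmod l)^2 * (K * (norm x)^2)" using nu by (intro mult_left_mono) auto
      also have "\<dots> = t^2*C*K*(r^2+s^2)" by (simp add: cl nx C_def power_mult_distrib)
      finally show ?thesis
        using reb
        by (simp add: algebra_simps)
    qed
    finally have "(norm (M *v x))^2 \<le> a2*r^2 - 2*t*C*r^2 + 2*t*D*r* s + t^2*C*K*(r^2+s^2)" .
    from real_key[OF a2 C D K t this] show ?thesis by (simp add: nx)
  qed
  have nn: "a2 - t*C/2 \<ge> 0" using t a2 by simp
  have "opnorm M \<le> sqrt (a2 - t*C/2)"
    unfolding opnorm_def
  proof (rule onorm_le)
    fix x
    have "norm (M *v x) = sqrt ((norm (M *v x))^2)" by simp
    also have "\<dots> \<le> sqrt ((a2 - t*C/2) * (norm x)^2)" using bound by (rule real_sqrt_le_mono)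
    also have "\<dots> = sqrt (a2 - t*C/2) * norm x" by (simp add: real_sqrt_mult)
    finally show "norm (M *v x) \<le> sqrt (a2 - t*C/2) * norm x" .
  qed
  also have "\<dots> < sqrt a2" using t C by simp
  also have "\<dots> = norm a" by (simp add: a2_def)
  also have "\<dots> \<le> opnorm (colmat j a)" by (rule opnorm_colmat_ge)
  finally have "opnorm M < opnorm (colmat j a)" .
  moreover have "opnorm M \<ge> opnorm (colmat j a)" using assms(2) by (simp add: bj_orth_def M_def)
  ultimately show False by simp
qed


lemma orth_if:
  assumes "ip a (column j Y) = 0"
  shows "bj_orth (colmat j a) Y"
  unfolding bj_orth_def
proof
  fix l
  define M where "M = colmat j a + cscale l Y"
  have ax: "(axis j 1 :: complex^2) $ j = 1" by (simp add: axis_def)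
  have Me: "M *v axis j 1 = a + l *s column j Y"
    unfolding M_def mv_add mv_colmat mv_cscale mv_axis[of Y] by (simp add: ax)
  have "(norm (a + l *s column j Y))^2 = (norm a)^2 + 2 * inner a (l *s column j Y) + (norm (l *s column j Y))^2"
    by (rule norm_add_sq)
  also have "inner a (l *s column j Y) = 0"
    by (simp add: inner_ip ip_scale_right assms)
  finally have "(norm a)^2 \<le> (norm (a + l *s column j Y))^2" by simp
  then have "norm a \<le> norm (M *v axis j 1)" unfolding Me by (rule power2_le_imp_le) simp
  also have "\<dots> \<le> opnorm M * norm (axis j 1 :: complex^2)" by (rule opnorm_ge)
  also have "\<dots> = opnorm M" by (simp add: norm_axis)
  finally show "opnorm (colmat j a) \<le> opnorm (colmat j a + cscale l Y)"
    using opnorm_colmat_le[of j a] by (simp add: M_def)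
qed

lemma orth_iff:
  assumes "a \<noteq> 0"
  shows "bj_orth (colmat j a) Y \<longleftrightarrow> ip a (column j Y) = 0"
  using orth_imp[OF assms] orth_if by blast

lemma rank_le1_iff: "rank (X::cmat2) \<le> 1 \<longleftrightarrow> det X = 0"
  using rank_det_nz[of X] rank_det_0[of X] by force

theorem lemma5p4:
  fixes \<alpha> \<beta> \<gamma> \<delta> :: complex
  assumes "rank (mat2 \<alpha> 0 \<beta> 0) = 1"
    and "rank (mat2 0 \<gamma> 0 \<delta>) = 1"
  shows "(\<forall>X \<in> bj_perp (mat2 \<alpha> 0 \<beta> 0) \<inter> bj_perp (mat2 0 \<gamma> 0 \<delta>). rank X \<le> 1)
     \<longleftrightarrow> ((\<alpha>, \<beta>) \<in> {(c * \<gamma>, c * \<delta>) | c. True} - {(0, 0)})"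
proof -
  define a :: "complex^2" where "a = (\<chi> i. if i = 1 then \<alpha> else \<beta>)"
  define b :: "complex^2" where "b = (\<chi> i. if i = 1 then \<gamma> else \<delta>)"
  have A: "mat2 \<alpha> 0 \<beta> 0 = colmat 1 a"
    by (simp add: vec_eq_iff forall_2 mat2_def colmat_def a_def)
  have B: "mat2 0 \<gamma> 0 \<delta> = colmat 2 b"
    by (simp add: vec_eq_iff forall_2 mat2_def colmat_def b_def)
  have ab0: "\<not> (\<alpha> = 0 \<and> \<beta> = 0)"
  proof
    assume "\<alpha> = 0 \<and> \<beta> = 0"
    then have "mat2 \<alpha> 0 \<beta> 0 = 0" by (simp add: vec_eq_iff forall_2 mat2_def)
    then show False using assms(1) rank_zero2[where 'a=complex] by simp
  qed
  have gd0: "\<not> (\<gamma> = 0 \<and> \<delta> = 0)"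
  proof
    assume "\<gamma> = 0 \<and> \<delta> = 0"
    then have "mat2 0 \<gamma> 0 \<delta> = 0" by (simp add: vec_eq_iff forall_2 mat2_def)
    then show False using assms(2) rank_zero2[where 'a=complex] by simp
  qed
  have a0: "a \<noteq> 0" using ab0 by (auto simp: a_def vec_eq_iff forall_2)
  have b0: "b \<noteq> 0" using gd0 by (auto simp: b_def vec_eq_iff forall_2)
  have perp: "X \<in> bj_perp (mat2 \<alpha> 0 \<beta> 0) \<inter> bj_perp (mat2 0 \<gamma> 0 \<delta>) \<longleftrightarrow>
      cnj \<alpha> * X$1$1 + cnj \<beta> * X$2$1 = 0 \<and> cnj \<gamma> * X$1$2 + cnj \<delta> * X$2$2 = 0" for X
    unfolding bj_perp_def A B using orth_iff[OF a0, of 1 X] orth_iff[OF b0, of 2 X]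
    by (simp add: ip_def sum_2 column_def a_def b_def)
  show ?thesis
  proof
    assume H: "\<forall>X \<in> bj_perp (mat2 \<alpha> 0 \<beta> 0) \<inter> bj_perp (mat2 0 \<gamma> 0 \<delta>). rank X \<le> 1"
    define X where "X = mat2 (cnj \<beta>) (cnj \<delta>) (- cnj \<alpha>) (- cnj \<gamma>)"
    have "X \<in> bj_perp (mat2 \<alpha> 0 \<beta> 0) \<inter> bj_perp (mat2 0 \<gamma> 0 \<delta>)"
      unfolding perp by (simp add: X_def mat2_def algebra_simps)
    then have "det X = 0" using H rank_le1_iff by blast
    then have "cnj (\<alpha> * \<delta> - \<beta> * \<gamma>) = 0" by (simp add: det_2 X_def mat2_def algebra_simps)
    then have ad: "\<alpha> * \<delta> = \<beta> * \<gamma>" by (simp only: complex_cnj_zero_iff) simp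
    have "\<exists>c. \<alpha> = c * \<gamma> \<and> \<beta> = c * \<delta>"
    proof (cases "\<gamma> = 0")
      case True
      then have "\<delta> \<noteq> 0" using gd0 by simp
      then show ?thesis using True ad by (intro exI[of _ "\<beta> / \<delta>"]) (auto simp: field_simps)
    next
      case False
      then show ?thesis using ad by (intro exI[of _ "\<alpha> / \<gamma>"]) (auto simp: field_simps)
    qed
    then show "(\<alpha>, \<beta>) \<in> {(c * \<gamma>, c * \<delta>) | c. True} - {(0, 0)}" using ab0 by auto
  next
    assume "(\<alpha>, \<beta>) \<in> {(c * \<gamma>, c * \<delta>) | c. True} - {(0, 0)}"
    then obtain c where c: "\<alpha> = c * \<gamma>" "\<beta> = c * \<delta>" by auto
    have c0: "c \<noteq> 0" using c ab0 by auto
    show "\<forall>X \<in> bj_perp (mat2 \<alpha> 0 \<beta> 0) \<inter> bj_perp (mat2 0 \<gamma> 0 \<delta>). rank X \<le> 1"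
    proof
      fix X assume "X \<in> bj_perp (mat2 \<alpha> 0 \<beta> 0) \<inter> bj_perp (mat2 0 \<gamma> 0 \<delta>)"
      then have e: "cnj \<alpha> * X$1$1 + cnj \<beta> * X$2$1 = 0" and e2: "cnj \<gamma> * X$1$2 + cnj \<delta> * X$2$2 = 0"
        unfolding perp by auto
      have "cnj c * (cnj \<gamma> * X$1$1 + cnj \<delta> * X$2$1) = 0" using e c by (simp add: algebra_simps)
      then have e1: "cnj \<gamma> * X$1$1 + cnj \<delta> * X$2$1 = 0" using c0 by simp
      have d: "det X = X$1$1 * X$2$2 - X$1$2 * X$2$1" by (simp add: det_2)
      have g: "cnj \<gamma> * det X = 0" unfolding d using e1 e2 by algebra
      have h: "cnj \<delta> * det X = 0" unfolding d using e1 e2 by algebra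
      have "det X = 0" using g h gd0 by auto
      then show "rank X \<le> 1" using rank_le1_iff by blast
    qed
  qed
qed

end
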